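(* Let $l\geq1$ be an integer, and in the dihedral group $D_{2l}=\langle a,b\mid a^2=b^2=(ab)^{2l}=1\rangle$ let $Y_t=a^{\epsilon_1}b^{\epsilon_2}a^{\epsilon_3}b^{\epsilon_4}\cdots$ be the alternating product of $t$ factors (the last factor is $a^{\epsilon_t}$ if $t$ is odd and $b^{\epsilon_t}$ if $t$ is even), where the $\epsilon_i$ are independent and uniform in $\{0,1\}$. Let $p_t(x)=\mathbb{P}(d(Y_t,\{e,a\})=x)$, where $d$ is the distance in the Cayley graph of $D_{2l}$ with respect to $\{a,b\}$. Then for each integer $t\geq0$, the sequence $(p_t(0),p_t(1),\dots,p_t(l-1))$ is non-increasing. *)

theory Defs
  imports Complex_Main
begin

text \<open>Concrete model of the dihedral group
  D_{2l} = < a, b | a^2 = b^2 = (ab)^{2l} = 1 > (order 4l), realised as the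
  affine maps x \<mapsto> (+/-)x + r of Z/(2l)Z.  An element (r, s) stands for
  x \<mapsto> (if s then -x else x) + r, with r normalised to {0..2l-1};
  the product is composition.  Then a = (0,True) : x \<mapsto> -x,
  b = (1,True) : x \<mapsto> 1 - x, and ab : x \<mapsto> x - 1 has order 2l.\<close>

type_synonym dih = "int \<times> bool"

definition dmult :: "nat \<Rightarrow> dih \<Rightarrow> dih \<Rightarrow> dih" where
  "dmult l g h = ((fst g + (if snd g then - fst h else fst h)) mod (2 * int l),
                  snd g \<noteq> snd h)"

definition did :: dih where "did = (0, False)"
definition gen_a :: dih where "gen_a = (0, True)"
definition gen_b :: dih where "gen_b = (1, True)"

definition walk :: "nat \<Rightarrow> dih \<Rightarrow> bool list \<Rightarrow> dih" where
  "walk l g ws = foldl (\<lambda>x w. dmult l x (if w then gen_b else gen_a)) g ws"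

definition cdist_set :: "nat \<Rightarrow> dih \<Rightarrow> dih set \<Rightarrow> nat" where
  "cdist_set l g S = (LEAST n. \<exists>ws. length ws = n \<and> walk l g ws \<in> S)"

definition fac_gen :: "nat \<Rightarrow> dih" where
  "fac_gen i = (if odd i then gen_a else gen_b)"

fun altprod :: "nat \<Rightarrow> nat \<Rightarrow> bool list \<Rightarrow> dih" where
  "altprod l i [] = did"
| "altprod l i (e # es) = dmult l (if e then fac_gen i else did) (altprod l (Suc i) es)"

definition Y :: "nat \<Rightarrow> bool list \<Rightarrow> dih" where
  "Y l es = altprod l 1 es"

definition p :: "nat \<Rightarrow> nat \<Rightarrow> nat \<Rightarrow> real" where
  "p l t x = real (card {es :: bool list. length es = t \<and> cdist_set l (Y l es) {did, gen_a} = x})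
             / 2 ^ t"

end

theory Submission
  imports Defs
begin

definition nrm :: "nat \<Rightarrow> dih \<Rightarrow> bool" where
  "nrm l g \<longleftrightarrow> 0 \<le> fst g \<and> fst g < 2 * int l"
definition pos :: "dih \<Rightarrow> int" where
  "pos g = 2 * fst g + (if snd g then 0 else 1)"
definition mA :: "int \<Rightarrow> int" where
  "mA q = (if even q then q + 1 else q - 1)"
definition mB :: "nat \<Rightarrow> int \<Rightarrow> int" where
  "mB l q = (if even q then (if q = 0 then 4 * int l - 1 else q - 1)
             else (if q = 4 * int l - 1 then 0 else q + 1))"
definition rf :: "nat \<Rightarrow> int \<Rightarrow> int" where
  "rf l q = (if q = 0 then 1 else if q = 1 then 0 else 4 * int l + 1 - q)"
definition dst :: "nat \<Rightarrow> int \<Rightarrow> int" where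
  "dst l q = (if q = 0 then 0 else if q \<le> 2 * int l then q - 1 else 4 * int l - q)"

lemma nrm_dmult: "l \<ge> 1 \<Longrightarrow> nrm l (dmult l g h)"
  by (simp add: nrm_def dmult_def)

lemma pos_range: "nrm l g \<Longrightarrow> 0 \<le> pos g \<and> pos g < 4 * int l"
  by (auto simp: nrm_def pos_def)

lemma pos_a: "nrm l g \<Longrightarrow> pos (dmult l g gen_a) = mA (pos g)"
  by (auto simp: nrm_def pos_def dmult_def gen_a_def mA_def)

lemma mod_m1: "0 \<le> (r::int) \<Longrightarrow> r < M \<Longrightarrow> (r - 1) mod M = (if r = 0 then M - 1 else r - 1)"
proof (cases "r = 0")
  case True
  assume "r < M" then show ?thesis using True by (simp add: zmod_minus1)
next
  case False
  assume "0 \<le> r" "r < M" then show ?thesis using False by simp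
qed

lemma mod_p1: "0 \<le> (r::int) \<Longrightarrow> r < M \<Longrightarrow> (r + 1) mod M = (if r = M - 1 then 0 else r + 1)"
  by auto

lemma pos_b: "l \<ge> 1 \<Longrightarrow> nrm l g \<Longrightarrow> pos (dmult l g gen_b) = mB l (pos g)"
  apply (cases g)
  apply (auto simp: nrm_def pos_def dmult_def gen_b_def mB_def mod_m1 mod_p1)
  done

lemma par_cases: obtains k where "(q::int) = 2*k" | k where "q = 2*k+1"
  by (metis oddE evenE)

lemma mA_range: "l \<ge> 1 \<Longrightarrow> 0 \<le> q \<Longrightarrow> q < 4 * int l \<Longrightarrow> 0 \<le> mA q \<and> mA q < 4 * int l"
  by (cases q rule: par_cases) (auto simp: mA_def)

lemma mB_range: "l \<ge> 1 \<Longrightarrow> 0 \<le> q \<Longrightarrow> q < 4 * int l \<Longrightarrow> 0 \<le> mB l q \<and> mB l q < 4 * int l"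
  by (cases q rule: par_cases; auto simp: mB_def; presburger)

lemma mA_inv: "mA (mA q) = q"
  by (cases q rule: par_cases) (auto simp: mA_def)

lemma mB_inv: "l \<ge> 1 \<Longrightarrow> 0 \<le> q \<Longrightarrow> q < 4 * int l \<Longrightarrow> mB l (mB l q) = q"
  by (cases q rule: par_cases; auto simp: mB_def; presburger)

lemma rf_range: "l \<ge> 1 \<Longrightarrow> 0 \<le> q \<Longrightarrow> q < 4 * int l \<Longrightarrow> 0 \<le> rf l q \<and> rf l q < 4 * int l"
  by (auto simp: rf_def)

lemma mA_rf: "l \<ge> 1 \<Longrightarrow> 0 \<le> q \<Longrightarrow> q < 4 * int l \<Longrightarrow> mA (rf l q) = rf l (mA q)"
  by (cases q rule: par_cases) (auto simp: mA_def rf_def)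

lemma mB_rf: "l \<ge> 1 \<Longrightarrow> 0 \<le> q \<Longrightarrow> q < 4 * int l \<Longrightarrow> mB l (rf l q) = rf l (mB l q)"
  by (cases q rule: par_cases; auto simp: mB_def rf_def; presburger)

lemma dst_A: "l \<ge> 1 \<Longrightarrow> 0 \<le> q \<Longrightarrow> q < 4 * int l \<Longrightarrow> dst l q \<le> dst l (mA q) + 1"
  by (cases q rule: par_cases) (auto simp: mA_def dst_def)

lemma dst_B: "l \<ge> 1 \<Longrightarrow> 0 \<le> q \<Longrightarrow> q < 4 * int l \<Longrightarrow> dst l q \<le> dst l (mB l q) + 1"
  by (cases q rule: par_cases; auto simp: mB_def dst_def; presburger)

lemma dst_nonneg: "0 \<le> q \<Longrightarrow> q < 4 * int l \<Longrightarrow> 0 \<le> dst l q"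
  by (auto simp: dst_def)

lemma dst_dec: "l \<ge> 1 \<Longrightarrow> 0 \<le> q \<Longrightarrow> q < 4 * int l \<Longrightarrow> dst l q \<ge> 1 \<Longrightarrow>
   dst l (mA q) = dst l q - 1 \<or> dst l (mB l q) = dst l q - 1"
  by (cases q rule: par_cases; auto simp: mA_def mB_def dst_def; presburger)

lemma dst_zero: "0 \<le> q \<Longrightarrow> q < 4 * int l \<Longrightarrow> dst l q = 0 \<Longrightarrow> q = 0 \<or> q = 1"
  by (auto simp: dst_def split: if_splits)

definition gn :: "bool \<Rightarrow> dih" where "gn w = (if w then gen_b else gen_a)"

lemma walk_Nil: "walk l g [] = g" by (simp add: walk_def)
lemma walk_Cons: "walk l g (w # ws) = walk l (dmult l g (gn w)) ws"
  by (simp add: walk_def gn_def)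

lemma pos_gn: "l \<ge> 1 \<Longrightarrow> nrm l g \<Longrightarrow> pos (dmult l g (gn w)) = (if w then mB l (pos g) else mA (pos g))"
  by (simp add: gn_def pos_a pos_b)

lemma in_set_pos: "nrm l g \<Longrightarrow> g \<in> {did, gen_a} \<longleftrightarrow> pos g = 0 \<or> pos g = 1"
  by (cases g) (auto simp: nrm_def pos_def did_def gen_a_def)

lemma walk_lower: "l \<ge> 1 \<Longrightarrow> nrm l g \<Longrightarrow> dst l (pos g) \<le> dst l (pos (walk l g ws)) + int (length ws)"
proof (induction ws arbitrary: g)
  case Nil then show ?case by (simp add: walk_Nil)
next
  case (Cons w ws)
  have n: "nrm l (dmult l g (gn w))" using Cons.prems nrm_dmult by blast
  have IH: "dst l (pos (dmult l g (gn w))) \<le> dst l (pos (walk l g (w # ws))) + int (length ws)"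
    using Cons.IH[OF Cons.prems(1) n] by (simp add: walk_Cons)
  have "dst l (pos g) \<le> dst l (pos (dmult l g (gn w))) + 1"
    using pos_gn[OF Cons.prems] pos_range[OF Cons.prems(2)] dst_A dst_B Cons.prems(1) by auto
  then show ?case using IH by simp
qed

lemma walk_upper: "l \<ge> 1 \<Longrightarrow> \<forall>g. nrm l g \<longrightarrow> dst l (pos g) = int n \<longrightarrow> (\<exists>ws. length ws = n \<and> walk l g ws \<in> {did, gen_a})"
proof (induction n)
  case 0
  then show ?case using dst_zero pos_range in_set_pos
    by (metis length_0_conv of_nat_0 walk_Nil)
next
  case (Suc n)
  show ?case
  proof (intro allI impI)
    fix g assume g: "nrm l g" "dst l (pos g) = int (Suc n)"
    have r: "0 \<le> pos g" "pos g < 4 * int l" using pos_range[OF g(1)] by auto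
    have "dst l (mA (pos g)) = int n \<or> dst l (mB l (pos g)) = int n"
      using dst_dec[OF Suc.prems r] g(2) by simp
    then obtain w where w: "dst l (pos (dmult l g (gn w))) = int n"
      using pos_gn[OF Suc.prems g(1)] by (metis (full_types))
    obtain ws where ws: "length ws = n" "walk l (dmult l g (gn w)) ws \<in> {did, gen_a}"
      using Suc.IH[OF Suc.prems] w nrm_dmult[OF Suc.prems] by blast
    show "\<exists>ws. length ws = Suc n \<and> walk l g ws \<in> {did, gen_a}"
      by (rule exI[of _ "w # ws"]) (use ws in \<open>simp add: walk_Cons\<close>)
  qed
qed

lemma cdist_eq: "l \<ge> 1 \<Longrightarrow> nrm l g \<Longrightarrow> cdist_set l g {did, gen_a} = nat (dst l (pos g))"
  unfolding cdist_set_def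
proof (rule Least_equality)
  assume l: "l \<ge> 1" and g: "nrm l g"
  have "dst l (pos g) = int (nat (dst l (pos g)))"
    using dst_nonneg pos_range[OF g] by simp
  then show "\<exists>ws. length ws = nat (dst l (pos g)) \<and> walk l g ws \<in> {did, gen_a}"
    using walk_upper[OF l] g by blast
next
  fix m assume l: "l \<ge> 1" and g: "nrm l g" and "\<exists>ws. length ws = m \<and> walk l g ws \<in> {did, gen_a}"
  then obtain ws where ws: "length ws = m" "walk l g ws \<in> {did, gen_a}" by blast
  have nw: "nrm l (walk l g ws)"
    using g l by (cases ws rule: rev_cases) (auto simp: walk_def nrm_dmult)
  have "dst l (pos (walk l g ws)) = 0"
    using ws(2) in_set_pos[OF nw] l by (auto simp: dst_def)
  then show "nat (dst l (pos g)) \<le> m" using walk_lower[OF l g, of ws] ws(1) by simp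
qed

lemma dmult_assoc: "dmult l (dmult l g h) k = dmult l g (dmult l h k)"
  by (cases g; cases h; cases k)
     (auto simp: dmult_def mod_add_left_eq mod_add_right_eq mod_minus_eq mod_diff_right_eq
        mod_diff_left_eq algebra_simps)

lemma dmult_id_r: "nrm l g \<Longrightarrow> dmult l g did = g"
  by (cases g) (auto simp: dmult_def did_def nrm_def)

lemma dmult_id_l: "nrm l g \<Longrightarrow> dmult l did g = g"
  by (cases g) (auto simp: dmult_def did_def nrm_def)

lemma nrm_E: "l \<ge> 1 \<Longrightarrow> nrm l (if e then fac_gen i else did)"
  by (auto simp: nrm_def fac_gen_def gen_a_def gen_b_def did_def)

lemma altprod_snoc: "l \<ge> 1 \<Longrightarrow>
  altprod l i (es @ [e]) = dmult l (altprod l i es) (if e then fac_gen (i + length es) else did)"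
proof (induction es arbitrary: i)
  case Nil
  then show ?case using nrm_E[OF Nil, of True i] nrm_E[OF Nil, of False i]
    by (cases e) (simp_all add: dmult_id_l dmult_id_r)
next
  case (Cons x es)
  then show ?case by (simp add: dmult_assoc)
qed

lemma nrm_Y: "l \<ge> 1 \<Longrightarrow> nrm l (Y l es)"
  by (cases es) (simp_all add: Y_def nrm_def did_def dmult_def)

lemma pos_Y_F: "l \<ge> 1 \<Longrightarrow> pos (Y l (es @ [False])) = pos (Y l es)"
  using nrm_Y[of l es] by (simp add: Y_def altprod_snoc dmult_id_r)

lemma pos_Y_T: "l \<ge> 1 \<Longrightarrow> pos (Y l (es @ [True])) =
   (if odd (Suc (length es)) then mA (pos (Y l es)) else mB l (pos (Y l es)))"
  using nrm_Y[of l es] by (simp add: Y_def altprod_snoc fac_gen_def pos_a pos_b)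

lemma fin_len: "finite {es :: bool list. length es = t \<and> P es}"
proof -
  have "{es :: bool list. length es = t \<and> P es} \<subseteq> {es. set es \<subseteq> UNIV \<and> length es = t}" by auto
  moreover have "finite {es :: bool list. set es \<subseteq> UNIV \<and> length es = t}"
    by (rule finite_lists_length_eq) simp
  ultimately show ?thesis by (rule finite_subset)
qed

lemma card_snoc: "card {es :: bool list. length es = Suc t \<and> P es} =
  card {es. length es = t \<and> P (es @ [False])} + card {es. length es = t \<and> P (es @ [True])}"
proof -
  let ?S0 = "{es :: bool list. length es = t \<and> P (es @ [False])}"
  let ?S1 = "{es :: bool list. length es = t \<and> P (es @ [True])}"
  have eq: "{es :: bool list. length es = Suc t \<and> P es} = (\<lambda>es. es @ [False]) ` ?S0 \<union> (\<lambda>es. es @ [True]) ` ?S1"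
  proof (rule set_eqI, rule iffI)
    fix es assume "es \<in> {es :: bool list. length es = Suc t \<and> P es}"
    then have h: "length es = Suc t" "P es" by auto
    then obtain ys y where ys: "es = ys @ [y]" by (metis length_Suc_conv_rev)
    then show "es \<in> (\<lambda>es. es @ [False]) ` ?S0 \<union> (\<lambda>es. es @ [True]) ` ?S1"
      using h by (cases y) auto
  qed auto
  have "card ((\<lambda>es. es @ [False]) ` ?S0 \<union> (\<lambda>es. es @ [True]) ` ?S1)
      = card ((\<lambda>es. es @ [False]) ` ?S0) + card ((\<lambda>es. es @ [True]) ` ?S1)"
    by (rule card_Un_disjoint) (auto simp: fin_len)
  also have "\<dots> = card ?S0 + card ?S1"
    by (subst card_image, simp add: inj_on_def)+ simp
  finally show ?thesis using eq by simp
qed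

definition cnt :: "nat \<Rightarrow> nat \<Rightarrow> int \<Rightarrow> nat" where
  "cnt l t q = card {es. length es = t \<and> pos (Y l es) = q}"

lemma cnt_Suc: "l \<ge> 1 \<Longrightarrow> 0 \<le> q \<Longrightarrow> q < 4 * int l \<Longrightarrow>
  cnt l (Suc t) q = cnt l t q + cnt l t (if odd (Suc t) then mA q else mB l q)"
proof -
  assume l: "l \<ge> 1" and q: "0 \<le> q" "q < 4 * int l"
  have a: "{es. length es = t \<and> pos (Y l (es @ [False])) = q} = {es. length es = t \<and> pos (Y l es) = q}"
    using pos_Y_F[OF l] by auto
  have b: "{es. length es = t \<and> pos (Y l (es @ [True])) = q} =
      {es. length es = t \<and> pos (Y l es) = (if odd (Suc t) then mA q else mB l q)}"
  proof (rule Collect_cong)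
    fix es
    have r: "0 \<le> pos (Y l es)" "pos (Y l es) < 4 * int l" using pos_range[OF nrm_Y[OF l]] by auto
    show "(length es = t \<and> pos (Y l (es @ [True])) = q) =
      (length es = t \<and> pos (Y l es) = (if odd (Suc t) then mA q else mB l q))"
      using pos_Y_T[OF l, of es] mA_inv mB_inv[OF l q] mB_inv[OF l r] by auto
  qed
  show ?thesis unfolding cnt_def by (subst card_snoc) (simp only: a b)
qed

definition Inv :: "nat \<Rightarrow> (int \<Rightarrow> nat) \<Rightarrow> bool" where
  "Inv l F \<longleftrightarrow> (\<forall>q. 0 \<le> q \<and> q < 4 * int l \<longrightarrow> F q = F (rf l q)) \<and>
              (\<forall>q. 1 \<le> q \<and> q \<le> 2 * int l - 1 \<longrightarrow> F (q + 1) \<le> F q)"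

lemma mono_A:
  assumes l: "l \<ge> 1" and I: "Inv l F" and q: "1 \<le> q" "q \<le> 2 * int l - 1"
  shows "F (q + 1) + F (mA (q + 1)) \<le> F q + F (mA q)"
proof (cases "even q")
  case True
  then show ?thesis by (simp add: mA_def)
next
  case False
  have sym: "\<And>q. 0 \<le> q \<Longrightarrow> q < 4 * int l \<Longrightarrow> F q = F (rf l q)"
    and mono: "\<And>q. 1 \<le> q \<Longrightarrow> q \<le> 2 * int l - 1 \<Longrightarrow> F (q + 1) \<le> F q"
    using I unfolding Inv_def by auto
  have e: "mA q = q - 1" "mA (q + 1) = q + 2" using False by (auto simp: mA_def)
  have m1: "F (q + 1) \<le> F q" using mono q by auto
  have m2: "F (q + 2) \<le> F (q + 1)"
  proof (cases "q + 1 \<le> 2 * int l - 1")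
    case True then show ?thesis using mono[of "q+1"] q by (simp add: add.assoc)
  next
    case False
    then have "q = 2 * int l - 1" using q by simp
    then have "rf l (q + 2) = q + 1" by (simp add: rf_def)
    moreover have "F (q + 2) = F (rf l (q + 2))" using sym[of "q+2"] q l by simp
    ultimately show ?thesis by simp
  qed
  have m3: "F q \<le> F (q - 1)"
  proof (cases "q = 1")
    case True
    have "rf l 0 = 1" by (simp add: rf_def)
    then show ?thesis using sym[of 0] l True by simp
  next
    case False
    then show ?thesis using mono[of "q - 1"] q by simp
  qed
  show ?thesis using e m1 m2 m3 by simp
qed

lemma mono_B:
  assumes l: "l \<ge> 1" and I: "Inv l F" and q: "1 \<le> q" "q \<le> 2 * int l - 1"
  shows "F (q + 1) + F (mB l (q + 1)) \<le> F q + F (mB l q)"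
proof (cases "even q")
  case False
  have "mB l q = q + 1" "mB l (q + 1) = q" using False q by (auto simp: mB_def)
  then show ?thesis by simp
next
  case True
  have mono: "\<And>q. 1 \<le> q \<Longrightarrow> q \<le> 2 * int l - 1 \<Longrightarrow> F (q + 1) \<le> F q"
    using I unfolding Inv_def by auto
  have q2: "2 \<le> q" "q + 1 \<le> 2 * int l - 1" using True q by presburger+
  have e: "mB l q = q - 1" "mB l (q + 1) = q + 2" using True q q2 by (auto simp: mB_def)
  have m1: "F (q + 1) \<le> F q" using mono q by auto
  have m2: "F (q + 2) \<le> F (q + 1)" using mono[of "q+1"] q2 by (simp add: add.assoc)
  have m3: "F q \<le> F (q - 1)" using mono[of "q - 1"] q2 by simp
  show ?thesis using e m1 m2 m3 by simp
qed

lemma inv_step: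
  assumes l: "l \<ge> 1" and I: "Inv l F" and M: "M = mA \<or> M = mB l"
    and G: "\<And>q. 0 \<le> q \<Longrightarrow> q < 4 * int l \<Longrightarrow> G q = F q + F (M q)"
  shows "Inv l G"
  unfolding Inv_def
proof (intro conjI allI impI)
  fix q assume q: "0 \<le> q \<and> q < 4 * int l"
  have sym: "\<And>q. 0 \<le> q \<Longrightarrow> q < 4 * int l \<Longrightarrow> F q = F (rf l q)"
    using I unfolding Inv_def by auto
  have rr: "0 \<le> rf l q" "rf l q < 4 * int l" using rf_range[OF l] q by auto
  have Mr: "0 \<le> M q" "M q < 4 * int l" using M mA_range[OF l] mB_range[OF l] q by auto
  have c: "M (rf l q) = rf l (M q)" using M mA_rf[OF l] mB_rf[OF l] q by auto
  show "G q = G (rf l q)"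
    using G[OF rr] G[of q] q c sym[of q] sym[OF Mr] by simp
next
  fix q assume q: "1 \<le> q \<and> q \<le> 2 * int l - 1"
  have "F (q + 1) + F (M (q + 1)) \<le> F q + F (M q)"
    using M mono_A[OF l I] mono_B[OF l I] q by auto
  then show "G (q + 1) \<le> G q" using G[of q] G[of "q+1"] q by simp
qed

lemma cnt0: "l \<ge> 1 \<Longrightarrow> cnt l 0 q = (if q = 1 then 1 else 0)"
proof -
  assume l: "l \<ge> 1"
  have "pos (Y l []) = 1" by (simp add: Y_def did_def pos_def)
  then have "{es. length es = 0 \<and> pos (Y l es) = q} = (if q = 1 then {[]} else {})" by auto
  then show ?thesis by (simp add: cnt_def)
qed

lemma inv_cnt: "l \<ge> 1 \<Longrightarrow> Inv l (cnt l (Suc t))"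
proof (induction t)
  case 0
  have c1: "\<And>q. 0 \<le> q \<Longrightarrow> q < 4 * int l \<Longrightarrow> cnt l 1 q = (if q = 0 \<or> q = 1 then 1 else 0)"
    using cnt_Suc[OF 0, of _ 0] cnt0[OF 0] by (auto simp: mA_def)
  show ?case unfolding Inv_def
  proof (intro conjI allI impI)
    fix q assume q: "0 \<le> q \<and> q < 4 * int l"
    have "0 \<le> rf l q \<and> rf l q < 4 * int l" using rf_range[OF 0] q by auto
    then show "cnt l (Suc 0) q = cnt l (Suc 0) (rf l q)" using c1 q by (auto simp: rf_def)
  next
    fix q assume q: "1 \<le> q \<and> q \<le> 2 * int l - 1"
    then show "cnt l (Suc 0) (q + 1) \<le> cnt l (Suc 0) q" using c1[of "q+1"] by simp
  qed
next
  case (Suc t)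
  show ?case
    by (rule inv_step[OF Suc.prems Suc.IH[OF Suc.prems], of "if odd (Suc (Suc t)) then mA else mB l"])
       (auto simp: cnt_Suc[OF Suc.prems])
qed

lemma level: "l \<ge> 1 \<Longrightarrow> 0 \<le> q \<Longrightarrow> q < 4 * int l \<Longrightarrow> x < l \<Longrightarrow>
  (nat (dst l q) = x) \<longleftrightarrow> (q = int x + 1 \<or> q = rf l (int x + 1))"
  by (auto simp: dst_def rf_def)

lemma card_level: assumes l: "l \<ge> 1" and x: "x < l"
  shows "card {es. length es = t \<and> cdist_set l (Y l es) {did, gen_a} = x}
         = cnt l t (int x + 1) + cnt l t (rf l (int x + 1))"
proof -
  have "{es. length es = t \<and> cdist_set l (Y l es) {did, gen_a} = x}
      = {es. length es = t \<and> pos (Y l es) = int x + 1} \<union> {es. length es = t \<and> pos (Y l es) = rf l (int x + 1)}"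
    using level[OF l _ _ x] pos_range[OF nrm_Y[OF l]] cdist_eq[OF l nrm_Y[OF l]] by auto
  moreover have "rf l (int x + 1) \<noteq> int x + 1" using x by (auto simp: rf_def)
  ultimately show ?thesis unfolding cnt_def
    by (simp add: card_Un_disjoint fin_len disjoint_iff)
qed

lemma chain: "(\<And>n. n < K \<Longrightarrow> G (Suc n) \<le> (G n :: nat)) \<Longrightarrow> m \<le> n \<Longrightarrow> n \<le> K \<Longrightarrow> G n \<le> G m"
proof (induction n)
  case 0 then show ?case by simp
next
  case (Suc n)
  show ?case
  proof (cases "m = Suc n")
    case False
    then have "G n \<le> G m" using Suc by simp
    moreover have "G (Suc n) \<le> G n" using Suc by simp
    ultimately show ?thesis by simp
  qed simp
qed

theorem fact3p3:
  fixes l t :: nat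
  assumes "l \<ge> 1"
  shows "\<forall>x y. x \<le> y \<and> y < l \<longrightarrow> p l t y \<le> p l t x"
proof (intro allI impI)
  fix x y assume xy: "x \<le> y \<and> y < l"
  note l = assms
  show "p l t y \<le> p l t x"
  proof (cases t)
    case 0
    have c: "cdist_set l (Y l []) {did, gen_a} = 0"
      using cdist_eq[OF l nrm_Y[OF l, of "[]"]] by (simp add: Y_def did_def pos_def dst_def)
    have "\<And>z. {es. length es = 0 \<and> cdist_set l (Y l es) {did, gen_a} = z} = (if z = 0 then {[]} else {})"
      using c by auto
    then show ?thesis using 0 xy by (simp add: p_def)
  next
    case (Suc t')
    have I: "Inv l (cnt l t)" using inv_cnt[OF l] Suc by simp
    have sym: "\<And>z. z < l \<Longrightarrow> cnt l t (rf l (int z + 1)) = cnt l t (int z + 1)"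
    proof -
      fix z assume z: "z < l"
      have "0 \<le> int z + 1" "int z + 1 < 4 * int l" using z by auto
      then show "cnt l t (rf l (int z + 1)) = cnt l t (int z + 1)"
        using I unfolding Inv_def by auto
    qed
    have G: "\<And>n. n < l - 1 \<Longrightarrow> cnt l t (int (Suc n) + 1) \<le> cnt l t (int n + 1)"
    proof -
      fix n assume n: "n < l - 1"
      have mono: "\<forall>q. 1 \<le> q \<and> q \<le> 2 * int l - 1 \<longrightarrow> cnt l t (q + 1) \<le> cnt l t q"
        using I unfolding Inv_def by (rule conjunct2)
      have "1 \<le> int n + 1" "int n + 1 \<le> 2 * int l - 1" using n by auto
      then have "cnt l t (int n + 1 + 1) \<le> cnt l t (int n + 1)" using mono by blast
      then show "cnt l t (int (Suc n) + 1) \<le> cnt l t (int n + 1)" by (simp add: add.commute)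
    qed
    have "cnt l t (int y + 1) \<le> cnt l t (int x + 1)"
    proof -
      have "y \<le> l - 1" using xy by linarith
      then show ?thesis using chain[of "l - 1" "\<lambda>n. cnt l t (int n + 1)" x y] G xy by blast
    qed
    then show ?thesis
      using card_level[OF l, of x t] card_level[OF l, of y t] sym[of x] sym[of y] xy
      by (simp add: p_def divide_right_mono)
  qed
qed

end
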